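(* Let $W$ be any matrix and $A$ any full rank matrix with the same number of columns as $W$, and let $D$ be a square diagonal matrix (with as many rows as $A$) all of whose diagonal entries are at least $1$. Then $\|W(DA)^+\|_F\le\|WA^+\|_F$.
   Context: $M^+$ denotes the Moore–Penrose pseudo-inverse of $M$ and $\|\cdot\|_F$ the Frobenius norm. *)

theory Defs
  imports "HOL-Analysis.Analysis"
begin

text \<open>Moore--Penrose pseudo-inverse of a real matrix: the unique matrix X satisfying the
  four Penrose conditions (for real matrices the conjugate transpose is the transpose).\<close>
definition pinv :: "real^'n^'m \<Rightarrow> real^'m^'n" where
  "pinv A = (THE X. A ** X ** A = A \<and> X ** A ** X = X \<and>
                    transpose (A ** X) = A ** X \<and> transpose (X ** A) = X ** A)"

definition frob_norm :: "real^'n^'m \<Rightarrow> real" where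
  "frob_norm M = sqrt (\<Sum>i\<in>UNIV. \<Sum>j\<in>UNIV. (M $ i $ j)\<^sup>2)"

definition full_rank :: "real^'n^'m \<Rightarrow> bool" where
  "full_rank A \<longleftrightarrow> rank A = min CARD('m) CARD('n)"

end

theory Submission
  imports Defs
begin

definition penrose :: "real^'n^'m \<Rightarrow> real^'m^'n \<Rightarrow> bool" where
  "penrose A X \<longleftrightarrow> A ** X ** A = A \<and> X ** A ** X = X \<and>
                    transpose (A ** X) = A ** X \<and> transpose (X ** A) = X ** A"

lemma penrose_unique:
  fixes A :: "real^'n^'m"
  assumes X: "penrose A X" and Y: "penrose A Y"
  shows "Y = X"
proof -
  have x1: "A ** X ** A = A" and x2: "X ** A ** X = X" and x3: "transpose (A ** X) = A ** X"
    and x4: "transpose (X ** A) = X ** A" using X unfolding penrose_def by auto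
  have y1: "A ** Y ** A = A" and y2: "Y ** A ** Y = Y" and y3: "transpose (A ** Y) = A ** Y"
    and y4: "transpose (Y ** A) = Y ** A" using Y unfolding penrose_def by auto
  have "X = X ** (A ** X)" using x2 by (simp add: matrix_mul_assoc)
  also have "\<dots> = X ** transpose (A ** X)" using x3 by simp
  also have "\<dots> = X ** transpose (A ** Y ** A ** X)" using y1 by simp
  also have "\<dots> = X ** (transpose (A ** X) ** transpose (A ** Y))"
    by (simp add: matrix_transpose_mul matrix_mul_assoc)
  also have "\<dots> = X ** A ** X ** A ** Y" using x3 y3 by (simp add: matrix_mul_assoc)
  also have "\<dots> = X ** A ** Y" using x2 by simp
  finally have ex: "X = X ** A ** Y" .
  have "Y = (Y ** A) ** Y" using y2 by simp
  also have "\<dots> = transpose (Y ** A) ** Y" using y4 by simp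
  also have "\<dots> = transpose (Y ** (A ** X ** A)) ** Y" using x1
    by (simp add: matrix_mul_assoc)
  also have "\<dots> = transpose (X ** A) ** transpose (Y ** A) ** Y"
    by (simp add: matrix_transpose_mul matrix_mul_assoc)
  also have "\<dots> = X ** A ** (Y ** A ** Y)" using x4 y4 by (simp add: matrix_mul_assoc)
  also have "\<dots> = X ** A ** Y" using y2 by simp
  finally show ?thesis using ex by simp
qed

lemma pinv_eq:
  fixes A :: "real^'n^'m"
  assumes "penrose A X"
  shows "pinv A = X"
proof -
  have "(THE X. penrose A X) = X"
    using assms penrose_unique by (intro the_equality) blast+
  then show ?thesis unfolding pinv_def penrose_def by simp
qed

lemma gram_inv:
  fixes A :: "real^'n^'m"
  assumes "inj ((*v) A)"
  shows "\<exists>B. B ** (transpose A ** A) = mat 1 \<and> (transpose A ** A) ** B = mat 1"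
proof -
  have "\<forall>x. (transpose A ** A) *v x = 0 \<longrightarrow> x = 0"
  proof (intro allI impI)
    fix x :: "real^'n"
    assume h: "(transpose A ** A) *v x = 0"
    have "(A *v x) \<bullet> (A *v x) = (x v* transpose A) \<bullet> (A *v x)" by simp
    also have "\<dots> = x \<bullet> (transpose A *v (A *v x))" by (rule dot_lmul_matrix)
    also have "\<dots> = 0" using h by (simp add: matrix_vector_mul_assoc)
    finally have "A *v x = 0" by simp
    then show "x = 0" using assms
      by (metis injD matrix_vector_mult_0_right)
  qed
  then obtain B where "B ** (transpose A ** A) = mat 1"
    using matrix_left_invertible_ker by blast
  then show ?thesis using matrix_left_right_inverse by blast
qed

lemma sym_inv:
  fixes G B :: "real^'n^'n"
  assumes "transpose G = G" "B ** G = mat 1" "G ** B = mat 1"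
  shows "transpose B = B"
proof -
  have "transpose B ** G = mat 1" using assms
    by (metis matrix_transpose_mul transpose_mat)
  then have "transpose B ** G ** B = B" by simp
  then show ?thesis using assms(3) by (simp add: matrix_mul_assoc[symmetric])
qed

lemma pinv_col:
  fixes A :: "real^'n^'m"
  assumes "inj ((*v) A)"
  shows "penrose A (pinv A) \<and> pinv A ** A = mat 1"
proof -
  obtain B where b1: "B ** (transpose A ** A) = mat 1" and b2: "(transpose A ** A) ** B = mat 1"
    using gram_inv[OF assms] by blast
  have bs: "transpose B = B"
    by (rule sym_inv[OF _ b1 b2]) (simp add: matrix_transpose_mul)
  define X where "X = B ** transpose A"
  have xa: "X ** A = mat 1" using b1 unfolding X_def by (simp add: matrix_mul_assoc)
  have p: "penrose A X" unfolding penrose_def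
  proof (intro conjI)
    show "A ** X ** A = A" using xa by (simp add: matrix_mul_assoc[symmetric])
    show "X ** A ** X = X" using xa by simp
    show "transpose (A ** X) = A ** X" unfolding X_def
      using bs by (simp add: matrix_transpose_mul matrix_mul_assoc)
    show "transpose (X ** A) = X ** A" using xa by simp
  qed
  then show ?thesis using pinv_eq[OF p] xa by simp
qed

lemma pinv_row:
  fixes A :: "real^'n^'m"
  assumes "inj ((*v) (transpose A))"
  shows "penrose A (pinv A) \<and> A ** pinv A = mat 1"
proof -
  obtain B where b1: "B ** (A ** transpose A) = mat 1" and b2: "(A ** transpose A) ** B = mat 1"
    using gram_inv[OF assms] by auto
  have bs: "transpose B = B"
    by (rule sym_inv[OF _ b1 b2]) (simp add: matrix_transpose_mul)
  define X where "X = transpose A ** B"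
  have ax: "A ** X = mat 1" using b2 unfolding X_def by (simp add: matrix_mul_assoc)
  have p: "penrose A X" unfolding penrose_def
  proof (intro conjI)
    show "A ** X ** A = A" using ax by simp
    show "X ** A ** X = X" using ax by (simp add: matrix_mul_assoc[symmetric])
    show "transpose (X ** A) = X ** A" unfolding X_def
      using bs by (simp add: matrix_transpose_mul matrix_mul_assoc)
    show "transpose (A ** X) = A ** X" using ax by simp
  qed
  then show ?thesis using pinv_eq[OF p] ax by simp
qed


definition fs :: "real^'n^'m \<Rightarrow> real" where
  "fs M = (\<Sum>i\<in>UNIV. M $ i \<bullet> M $ i)"

lemma frob_fs: "frob_norm M = sqrt (fs M)"
  unfolding frob_norm_def fs_def inner_vec_def by (simp add: power2_eq_square)

lemma row_mult: "(Z ** P) $ i = Z $ i v* P"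
  by (simp add: matrix_matrix_mult_def vector_matrix_mult_def vec_eq_iff mult.commute)

lemma proj_vec:
  fixes P :: "real^'m^'m" and z :: "real^'m"
  assumes "transpose P = P" "P ** P = P"
  shows "(z v* P) \<bullet> (z v* P) \<le> z \<bullet> z"
proof -
  have e: "z v* P = P *v z" using assms(1) by (metis vector_transpose_matrix)
  have "(P *v z) \<bullet> (P *v z) = ((P *v z) v* P) \<bullet> z"
    by (rule dot_lmul_matrix[symmetric])
  also have "(P *v z) v* P = P *v (P *v z)"
    using assms(1) by (metis vector_transpose_matrix)
  also have "\<dots> = P *v z" using assms(2) by (simp add: matrix_vector_mul_assoc)
  finally have k: "(P *v z) \<bullet> (P *v z) = (P *v z) \<bullet> z" .
  have "0 \<le> (z - P *v z) \<bullet> (z - P *v z)" by simp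
  also have "\<dots> = z \<bullet> z - 2 * ((P *v z) \<bullet> z) + (P *v z) \<bullet> (P *v z)"
    by (simp add: inner_diff_left inner_diff_right inner_commute)
  finally show ?thesis using e k by simp
qed

lemma fs_proj:
  fixes P :: "real^'m^'m" and Z :: "real^'m^'p"
  assumes "transpose P = P" "P ** P = P"
  shows "fs (Z ** P) \<le> fs Z"
  unfolding fs_def row_mult by (intro sum_mono proj_vec assms)

lemma fs_diag:
  fixes E :: "real^'m^'m" and Z :: "real^'m^'p"
  assumes "\<And>i j. i \<noteq> j \<Longrightarrow> E $ i $ j = 0" "\<And>j. \<bar>E $ j $ j\<bar> \<le> 1"
  shows "fs (Z ** E) \<le> fs Z"
proof -
  have ent: "(Z ** E) $ i $ j = Z $ i $ j * E $ j $ j" for i j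
  proof -
    have "(\<Sum>k\<in>UNIV. Z $ i $ k * E $ k $ j) = (\<Sum>k\<in>UNIV. if k = j then Z $ i $ j * E $ j $ j else 0)"
      by (rule sum.cong) (auto simp: assms(1))
    then have "(Z ** E) $ i $ j = (\<Sum>k\<in>UNIV. if k = j then Z $ i $ j * E $ j $ j else 0)"
      unfolding matrix_matrix_mult_def by simp
    then show ?thesis by simp
  qed
  have sq: "(Z $ i $ j * E $ j $ j) * (Z $ i $ j * E $ j $ j) \<le> Z $ i $ j * Z $ i $ j" for i j
  proof -
    have "(E $ j $ j)^2 \<le> 1" using assms(2)[of j] by (simp add: abs_le_square_iff[of _ 1, simplified])
    then have "(Z $ i $ j)^2 * (E $ j $ j)^2 \<le> (Z $ i $ j)^2 * 1"
      by (intro mult_left_mono) auto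
    then show ?thesis by (simp add: power2_eq_square algebra_simps)
  qed
  show ?thesis unfolding fs_def inner_vec_def ent
    by (intro sum_mono) (simp add: sq)
qed

lemma diag_mult:
  fixes D :: "real^'m^'m" and M :: "real^'n^'m"
  assumes "\<And>i j. i \<noteq> j \<Longrightarrow> D $ i $ j = 0"
  shows "(D ** M) $ i $ j = D $ i $ i * M $ i $ j"
proof -
  have "(\<Sum>k\<in>UNIV. D $ i $ k * M $ k $ j) = (\<Sum>k\<in>UNIV. if k = i then D $ i $ i * M $ i $ j else 0)"
    by (rule sum.cong) (auto simp: assms)
  then have "(D ** M) $ i $ j = (\<Sum>k\<in>UNIV. if k = i then D $ i $ i * M $ i $ j else 0)"
    unfolding matrix_matrix_mult_def by simp
  then show ?thesis by simp
qed

theorem mainTheorem6: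
  fixes W :: "real^'n^'p" and A :: "real^'n^'m" and D :: "real^'m^'m"
  assumes "full_rank A"
    and "\<And>i j. i \<noteq> j \<Longrightarrow> D $ i $ j = 0"
    and "\<And>i. D $ i $ i \<ge> 1"
  shows "frob_norm (W ** pinv (D ** A)) \<le> frob_norm (W ** pinv A)"
proof -
  define E :: "real^'m^'m" where "E = (\<chi> i j. if i = j then 1 / D $ i $ i else 0)"
  have Eoff: "\<And>i j. i \<noteq> j \<Longrightarrow> E $ i $ j = 0" unfolding E_def by simp
  have Ediag: "\<bar>E $ j $ j\<bar> \<le> 1" for j
    using assms(3)[of j] unfolding E_def by simp
  have ED: "E ** D = mat 1"
  proof -
    have "(E ** D) $ i $ j = mat 1 $ i $ j" for i j
      using diag_mult[OF Eoff, of D i j] assms(2)[of i j] assms(3)[of i]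
      by (cases "i = j") (auto simp: E_def mat_def)
    then show ?thesis by (simp add: vec_eq_iff)
  qed
  have DE: "D ** E = mat 1"
  proof -
    have "(D ** E) $ i $ j = mat 1 $ i $ j" for i j
      using diag_mult[OF assms(2), of E i j] assms(3)[of i]
      by (cases "i = j") (auto simp: E_def mat_def)
    then show ?thesis by (simp add: vec_eq_iff)
  qed
  define X where "X = D ** A"
  have bound: "fs (W ** pinv X) \<le> fs (W ** pinv A)"
  proof (cases "CARD('n) \<le> CARD('m)")
    case True
    then have "rank A = CARD('n)" using assms(1) unfolding full_rank_def by simp
    then have injA: "inj ((*v) A)" using full_rank_injective by blast
    have injX: "inj ((*v) X)"
    proof (rule injI)
      fix x y assume "X *v x = X *v y"
      then have "E *v (D *v (A *v x)) = E *v (D *v (A *v y))"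
        unfolding X_def by (simp add: matrix_vector_mul_assoc)
      moreover have "E ** (D ** A) = A" by (metis ED matrix_mul_assoc matrix_mul_lid)
      ultimately have "A *v x = A *v y" by (simp add: matrix_vector_mul_assoc)
      then show "x = y" using injA by (simp add: inj_eq)
    qed
    have pa: "pinv A ** A = mat 1" using pinv_col[OF injA] by simp
    have px: "penrose X (pinv X)" and px2: "pinv X ** X = mat 1" using pinv_col[OF injX] by auto
    let ?P = "X ** pinv X"
    have P1: "transpose ?P = ?P" using px unfolding penrose_def by simp
    have P2: "?P ** ?P = ?P" using px unfolding penrose_def by (simp add: matrix_mul_assoc)
    have "W ** pinv X = W ** (pinv A ** A) ** pinv X" using pa by simp
    also have "\<dots> = W ** pinv A ** (E ** D) ** A ** pinv X" using ED by (simp add: matrix_mul_assoc)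
    also have "\<dots> = (W ** pinv A ** E) ** ?P" unfolding X_def by (simp add: matrix_mul_assoc)
    finally have "W ** pinv X = (W ** pinv A ** E) ** ?P" .
    then have "fs (W ** pinv X) \<le> fs (W ** pinv A ** E)" using fs_proj[OF P1 P2] by simp
    also have "\<dots> \<le> fs (W ** pinv A)" by (rule fs_diag[OF Eoff Ediag])
    finally show ?thesis .
  next
    case False
    then have "rank (transpose A) = CARD('m)" using assms(1) unfolding full_rank_def
      by (simp add: rank_transpose)
    then have injA: "inj ((*v) (transpose A))" using full_rank_injective by blast
    have pa: "penrose A (pinv A)" and pa2: "A ** pinv A = mat 1" using pinv_row[OF injA] by auto
    have "penrose X (pinv A ** E)" unfolding penrose_def
    proof (intro conjI)
      have xx: "X ** (pinv A ** E) = mat 1" unfolding X_def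
        using pa2 DE by (metis matrix_mul_assoc matrix_mul_rid)
      show "X ** (pinv A ** E) ** X = X" using xx by simp
      show "pinv A ** E ** X ** (pinv A ** E) = pinv A ** E"
        using xx by (simp add: matrix_mul_assoc[symmetric])
      show "transpose (X ** (pinv A ** E)) = X ** (pinv A ** E)" using xx by simp
      have "pinv A ** E ** X = pinv A ** A" unfolding X_def
        using ED by (metis matrix_mul_assoc matrix_mul_lid)
      then show "transpose (pinv A ** E ** X) = pinv A ** E ** X"
        using pa unfolding penrose_def by simp
    qed
    then have "pinv X = pinv A ** E" by (rule pinv_eq)
    then have "W ** pinv X = (W ** pinv A) ** E" by (simp add: matrix_mul_assoc)
    then show ?thesis using fs_diag[OF Eoff Ediag, of "W ** pinv A"] by simp
  qed
  show ?thesis unfolding frob_fs X_def[symmetric] using bound by simp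
qed

end
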